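(* Let $b(n)=\lfloor n\varphi\rfloor$, $c(n)=\lfloor n\varphi^2+\tfrac12\rfloor$, and $x(n)=a(b(n))-b(a(n))$. Then: (a) $a(b(n))\ge b(a(n))$ for all $n\ge0$. (b) For $n\ge1$, $x(n)$ equals the parity (number mod $2$) of the number of $1$'s in the Fibonacci representation of $n-1$. (c) $b(a(b(n)))\ge a(b(a(n)))$ for all $n\ge 0$. (d) $a(a(b(n)))-a(b(a(n)))\in\{-2,0,2\}$ for all $n\ge0$. (e) Setting $d(n)=c(a(n))-a(b(n))-a(n)$, we have $d(n)\in\{-1,0,1\}$ for all $n\ge0$. (f) For $n\ge1$, $d(n)=0$ if and only if $\mathbf f[n-1]=1$. (g) For $n\ge 1$, $c(a(b(n)))+a(b(n))-a(b(b(n)))-2\,b(a(n))=1$.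
   Context: $\varphi=(1+\sqrt5)/2$. Let $(F_n)_{n\ge 0}$ be the Fibonacci numbers: $F_0=0$, $F_1=1$, $F_n=F_{n-1}+F_{n-2}$ for $n\ge 2$. Define $(a(n))_{n\ge 0}$ (OEIS A105774) by $a(0)=0$, $a(1)=1$, and for $n\ge 2$, $a(n)=F_{j+1}-a(n-F_j)$, where $j\ge 2$ is the unique index with $F_j<n\le F_{j+1}$. The Fibonacci (Zeckendorf) representation of $m\ge0$ is the binary string $e_1\cdots e_t$ with no two consecutive $1$'s and $m=\sum_{i=1}^t e_iF_{t-i+2}$ (empty for $m=0$). $\mathbf f=\mathbf f[0]\mathbf f[1]\mathbf f[2]\cdots=01001010\cdots$ is the infinite Fibonacci word, the fixed point of the morphism $0\mapsto 01$, $1\mapsto 0$. *)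

theory Defs
  imports Complex_Main "HOL-Number_Theory.Fib"
begin

definition phi :: real where "phi = (1 + sqrt 5) / 2"

lemma le_fib_Suc: "n \<le> fib (Suc n)"
proof (induction n rule: fib.induct)
  case 1 then show ?case by simp
next
  case 2 then show ?case by simp
next
  case (3 n)
  have "fib (Suc (Suc (Suc n))) = fib (Suc (Suc n)) + fib (Suc n)" by simp
  moreover have "fib (Suc n) > 0" by (simp add: fib_neq_0_nat)
  ultimately show ?case using 3 by simp
qed

definition fibidx :: "nat \<Rightarrow> nat" where
  "fibidx n = (LEAST j. n \<le> fib (Suc j))"

lemma fibidx_ge2: assumes "n \<ge> 2" shows "fibidx n \<ge> 2"
proof -
  have ex: "n \<le> fib (Suc (fibidx n))" unfolding fibidx_def
    by (rule LeastI[of _ n]) (rule le_fib_Suc)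
  show ?thesis
  proof (rule ccontr)
    assume "\<not> 2 \<le> fibidx n"
    then have "fibidx n = 0 \<or> fibidx n = 1" by auto
    then show False using ex assms by (auto simp: numeral_2_eq_2)
  qed
qed

function A :: "nat \<Rightarrow> nat" where
  "A n = (if n \<le> 1 then n
          else fib (Suc (fibidx n)) - A (n - fib (fibidx n)))"
  by auto
termination
proof (relation "measure id")
  fix n :: nat assume "\<not> n \<le> 1"
  then have "fibidx n \<ge> 2" using fibidx_ge2 by auto
  then have "fib (fibidx n) > 0" by (simp add: fib_neq_0_nat)
  then show "(n - fib (fibidx n), n) \<in> measure id" using \<open>\<not> n \<le> 1\<close> by simp
qed simp

declare A.simps[simp del]

definition B :: "nat \<Rightarrow> nat" where "B n = nat \<lfloor>real n * phi\<rfloor>"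
definition C :: "nat \<Rightarrow> nat" where "C n = nat \<lfloor>real n * phi ^ 2 + 1 / 2\<rfloor>"

text \<open>Zeckendorf representation e_1 ... e_t (True = digit 1), leading digit 1,
  no two consecutive 1's, m = sum e_i F_(t-i+2); empty for m = 0.\<close>
definition is_zeck_rep :: "nat \<Rightarrow> bool list \<Rightarrow> bool" where
  "is_zeck_rep m es \<longleftrightarrow>
     (es \<noteq> [] \<longrightarrow> hd es) \<and>
     (\<forall>k. Suc k < length es \<longrightarrow> \<not> (es ! k \<and> es ! Suc k)) \<and>
     m = (\<Sum>k<length es. if es ! k then fib (length es - k + 1) else 0)"

definition zeck :: "nat \<Rightarrow> bool list" where
  "zeck m = (THE es. is_zeck_rep m es)"

definition zeck_ones :: "nat \<Rightarrow> nat" where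
  "zeck_ones m = length (filter id (zeck m))"

text \<open>Fibonacci word: fixed point of 0 -> 01, 1 -> 0.\<close>
definition fib_morph :: "nat list \<Rightarrow> nat list" where
  "fib_morph w = concat (map (\<lambda>x. if x = 0 then [0, 1] else [0]) w)"

definition fword :: "nat \<Rightarrow> nat" where
  "fword n = ((fib_morph ^^ n) [0]) ! n"

end

theory Submission
  imports Defs
begin



lemma fib_ge1: "n \<ge> 1 \<Longrightarrow> fib n \<ge> 1"
  using fib_neq_0_nat[of n] by simp

lemma fib_SS: "fib (Suc (Suc n)) = fib (Suc n) + fib n" by simp

lemma fib_strict: "2 \<le> m \<Longrightarrow> m < n \<Longrightarrow> fib m < fib n"
proof (induction n)
  case 0 then show ?case by simp
next
  case (Suc n)
  show ?case
  proof (cases "m < n")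
    case True
    then have "fib m < fib n" using Suc by simp
    moreover have "fib n < fib (Suc n)"
    proof -
      obtain k where "n = Suc k" "k \<ge> 1" using True Suc.prems by (cases n) auto
      then show ?thesis using fib_ge1[of k] by simp
    qed
    ultimately show ?thesis by simp
  next
    case False
    then have "m = n" using Suc by simp
    obtain k where "n = Suc k" "k \<ge> 1" using \<open>m = n\<close> Suc.prems by (cases n) auto
    then show ?thesis using fib_ge1[of k] \<open>m = n\<close> by simp
  qed
qed

lemma fib_less_imp: "fib m < fib n \<Longrightarrow> m < n"
  using fib_mono[of n m] by (metis not_le)

lemma fibidx_props:
  assumes "n \<ge> 2"
  shows "fib (fibidx n) < n" "n \<le> fib (Suc (fibidx n))" "fibidx n \<ge> 2"
proof -
  show ex: "n \<le> fib (Suc (fibidx n))" unfolding fibidx_def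
    by (rule LeastI[of _ n]) (rule le_fib_Suc)
  show j2: "fibidx n \<ge> 2" using fibidx_ge2 assms by simp
  obtain k where k: "fibidx n = Suc k" using j2 by (cases "fibidx n") auto
  have "\<not> n \<le> fib (Suc k)"
  proof
    assume "n \<le> fib (Suc k)"
    then have "fibidx n \<le> k" unfolding fibidx_def by (rule Least_le)
    then show False using k by simp
  qed
  then show "fib (fibidx n) < n" using k by simp
qed

lemma fibidx_eq:
  assumes "j \<ge> 2" "fib j < n" "n \<le> fib (Suc j)"
  shows "fibidx n = j"
  unfolding fibidx_def
proof (rule Least_equality)
  show "n \<le> fib (Suc j)" by fact
  fix y assume "n \<le> fib (Suc y)"
  show "j \<le> y"
  proof (rule ccontr)
    assume "\<not> j \<le> y"
    then have "fib (Suc y) \<le> fib j" by (intro fib_mono) simp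
    then show False using assms \<open>n \<le> fib (Suc y)\<close> by simp
  qed
qed

lemma A_0[simp]: "A 0 = 0" by (simp add: A.simps)
lemma A_1[simp]: "A 1 = 1" by (simp add: A.simps)
lemma A_Suc0[simp]: "A (Suc 0) = 1" by (simp add: A.simps)

lemma A_rec:
  assumes "j \<ge> 2" "1 \<le> r" "r \<le> fib (j - 1)"
  shows "A (fib j + r) = fib (Suc j) - A r"
proof -
  obtain k where k: "j = Suc k" using assms by (cases j) auto
  have fj: "fib j \<ge> 1" using fib_ge1 assms by simp
  have up: "fib j + r \<le> fib (Suc j)" using assms k by (cases k) auto
  have idx: "fibidx (fib j + r) = j" using fibidx_eq[OF assms(1)] assms up by simp
  have "\<not> fib j + r \<le> 1" using fj assms by simp
  then show ?thesis by (subst A.simps) (simp add: idx)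
qed

lemma A_decomp:
  assumes "n \<ge> 2"
  obtains j r where "j \<ge> 2" "1 \<le> r" "r \<le> fib (j - 1)" "n = fib j + r" "fibidx n = j"
proof -
  let ?j = "fibidx n"
  have p: "fib ?j < n" "n \<le> fib (Suc ?j)" "?j \<ge> 2" using fibidx_props assms by auto
  obtain k where k: "?j = Suc k" using p by (cases ?j) auto
  have "fib (Suc ?j) = fib ?j + fib (?j - 1)" using k by (cases k) auto
  then show ?thesis using that[of ?j "n - fib ?j"] p by auto
qed

lemma A_bounds_aux:
  "n \<ge> 2 \<Longrightarrow> fib (fibidx n) \<le> A n \<and> A n + 1 \<le> fib (Suc (fibidx n))"
proof (induction n rule: less_induct)
  case (less n)
  obtain j r where d1: "j \<ge> 2" and d2: "1 \<le> r" and d3: "r \<le> fib (j - 1)"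
    and d4: "n = fib j + r" and d5: "fibidx n = j"
    using A_decomp less.prems by blast
  obtain k where k: "j = Suc k" using d1 by (cases j) auto
  have fjs: "fib (Suc j) = fib j + fib k" using k d1 by (cases k) auto
  have ar: "1 \<le> A r \<and> A r \<le> fib (j - 1)"
  proof (cases "r = 1")
    case True then show ?thesis using fib_ge1[of "j - 1"] d1 by simp
  next
    case False
    then have r2: "r \<ge> 2" using d2 by simp
    have rl: "r < n" using d4 fib_ge1[of j] d1 by simp
    have ih: "fib (fibidx r) \<le> A r \<and> A r + 1 \<le> fib (Suc (fibidx r))" using less.IH[OF rl r2] .
    have "fib (fibidx r) < r" using fibidx_props r2 by simp
    then have "fib (fibidx r) < fib (j - 1)" using d3 by simp
    then have "fibidx r < j - 1" by (rule fib_less_imp)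
    then have "fib (Suc (fibidx r)) \<le> fib (j - 1)" by (intro fib_mono) simp
    moreover have "fib (fibidx r) \<ge> 1" using fib_ge1 fibidx_props(3)[OF r2] by simp
    ultimately show ?thesis using ih by simp
  qed
  have an: "A n = fib (Suc j) - A r" using A_rec[OF d1 d2 d3] d4 by simp
  have "fib (j - 1) = fib k" using k by simp
  then have ar': "1 \<le> A r" "A r \<le> fib k" using ar by auto
  show ?case unfolding an d5 fjs using ar' by linarith
qed

lemma A_pos: "n \<ge> 1 \<Longrightarrow> A n \<ge> 1"
  using A_bounds_aux[of n] fib_ge1[of "fibidx n"] fibidx_props(3)[of n]
  by (cases "n = 1") auto

lemma A_le: assumes "1 \<le> r" "r \<le> fib k" "k \<ge> 3" shows "A r + 1 \<le> fib k"
proof (cases "r = 1")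
  case True
  have "fib 3 \<le> fib k" using assms by (intro fib_mono) simp
  then show ?thesis using True by (simp add: numeral_3_eq_3)
next
  case False
  then have r2: "r \<ge> 2" using assms by simp
  have "fib (fibidx r) < fib k" using fibidx_props(1)[OF r2] assms by simp
  then have "fibidx r < k" by (rule fib_less_imp)
  then have "fib (Suc (fibidx r)) \<le> fib k" by (intro fib_mono) simp
  then show ?thesis using A_bounds_aux[OF r2] by simp
qed

lemma A_le': assumes "r \<le> fib k" "k \<ge> 1" shows "A r \<le> fib k"
proof (cases "r = 0")
  case True then show ?thesis by simp
next
  case False
  show ?thesis
  proof (cases "k \<ge> 3")
    case True then show ?thesis using A_le[of r k] assms False by simp
  next
    case False2: False
    then have "k = 1 \<or> k = 2" using assms by auto
    then have "r = 1" using assms False by (auto simp: numeral_2_eq_2)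
    then show ?thesis using assms fib_ge1 by simp
  qed
qed

lemma A_2[simp]: "A 2 = 1" using A_rec[of 2 1] by (simp add: numeral_2_eq_2)
lemma A_3[simp]: "A 3 = 2" using A_rec[of 3 1] by (simp add: numeral_3_eq_3 numeral_2_eq_2)
lemma fib_small: "fib 3 = 2" "fib 4 = 3" "fib 5 = 5" "fib 6 = 8" "fib 7 = 13"
  by (simp_all add: numeral_eq_Suc)

lemma A_4[simp]: "A 4 = 4"
proof -
  have "A (fib 4 + 1) = fib (Suc 4) - A 1" by (rule A_rec) (simp_all add: fib_small)
  then show ?thesis by (simp add: fib_small)
qed
lemma A_5[simp]: "A 5 = 4"
proof -
  have "A (fib 4 + 2) = fib (Suc 4) - A 2" by (rule A_rec) (simp_all add: fib_small)
  then show ?thesis by (simp add: fib_small)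
qed




definition psi :: real where "psi = (1 - sqrt 5) / 2"
definition qq :: real where "qq = (sqrt 5 - 1) / 2"

lemma s5: "sqrt 5 * sqrt 5 = (5::real)" by simp
lemma s5_bounds: "2.2 < sqrt (5::real)" "sqrt (5::real) < 2.25"
proof -
  show "2.2 < sqrt (5::real)" by (rule real_less_rsqrt) (simp add: power2_eq_square)
  show "sqrt (5::real) < 2.25" by (rule real_less_lsqrt) (simp_all add: power2_eq_square)
qed

lemma psi_qq: "psi = - qq" by (simp add: psi_def qq_def field_simps)
lemma phi_qq: "phi = 1 + qq" by (simp add: phi_def qq_def field_simps)
lemma qq_pos: "0 < qq" and qq_lt1: "qq < 1"
  using s5_bounds by (simp_all add: qq_def)
lemma qq_sq: "qq * qq = 1 - qq"
  by (simp add: qq_def field_simps algebra_simps)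
lemma phi_qq_mult: "phi * qq = 1" using qq_sq by (simp add: phi_qq algebra_simps)
lemma phi_sq: "phi * phi = phi + 1" using qq_sq by (simp add: phi_qq algebra_simps)
lemma psi_sq: "psi * psi = psi + 1" using qq_sq by (simp add: psi_qq algebra_simps)
lemma phi_psi: "phi * psi = -1" "phi + psi = 1" using phi_qq_mult by (simp_all add: psi_qq phi_qq)
lemma phi_plus_qq: "phi + qq = sqrt 5" by (simp add: phi_def qq_def field_simps)
lemma phi_gt1: "phi > 1" using qq_pos by (simp add: phi_qq)
lemma phi_bounds: "1.6 < phi" "phi < 1.625" using s5_bounds by (simp_all add: phi_def)

lemma fib_phi: "real (fib (Suc k)) - phi * real (fib k) = psi ^ k"
proof (induction k rule: fib.induct)
  case 1 then show ?case by simp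
next
  case 2 then show ?case using phi_psi by (simp add: algebra_simps)
next
  case (3 n)
  have "real (fib (Suc (Suc (Suc n)))) - phi * real (fib (Suc (Suc n)))
      = (real (fib (Suc (Suc n))) - phi * real (fib (Suc n))) + (real (fib (Suc n)) - phi * real (fib n))"
    by (simp add: algebra_simps)
  also have "\<dots> = psi ^ Suc n + psi ^ n" using 3 by simp
  also have "\<dots> = psi ^ n * (psi + 1)" by (simp add: algebra_simps)
  also have "\<dots> = psi ^ Suc (Suc n)"
  proof -
    have "psi ^ Suc (Suc n) = psi ^ n * (psi * psi)" by (simp add: algebra_simps)
    then show ?thesis using psi_sq by simp
  qed
  finally show ?case .
qed

lemma binet: "sqrt 5 * real (fib k) = phi ^ k - psi ^ k"
  using fib_closed_form[of k] by (simp add: phi_def psi_def)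

lemma abs_psi_pow: "\<bar>psi ^ k\<bar> = qq ^ k"
  using qq_pos by (simp add: psi_qq power_abs)

lemma qq_pow_le1: "qq ^ k \<le> 1" using qq_pos qq_lt1 by (simp add: power_le_one)
lemma qq_pow_pos: "qq ^ k > 0" using qq_pos by simp

lemma norm_nonzero:
  fixes p s :: int
  shows "s \<noteq> 0 \<Longrightarrow> p * p - s * p - s * s \<noteq> 0"
proof (induction "nat \<bar>s\<bar>" arbitrary: p s rule: less_induct)
  case less
  show ?case
  proof (cases "even s \<and> even p")
    case True
    then obtain s' p' where sp: "s = 2 * s'" "p = 2 * p'" by (auto elim!: evenE)
    have "s' \<noteq> 0" using less.prems sp by simp
    then have "nat \<bar>s'\<bar> < nat \<bar>s\<bar>" using sp by simp
    then have "p' * p' - s' * p' - s' * s' \<noteq> 0" using less.hyps \<open>s' \<noteq> 0\<close> by blast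
    then show ?thesis using sp by (simp add: algebra_simps)
  next
    case False
    have "odd (p * p - s * p - s * s)"
    proof (cases "even s")
      case True
      then have "odd p" using False by simp
      then show ?thesis using True by simp
    next
      case False
      have "p * p - s * p - s * s = p * (p - s) - s * s" by (simp add: algebra_simps)
      moreover have "even (p * (p - s))" using False by (cases "even p") auto
      ultimately show ?thesis using False by simp
    qed
    then show ?thesis by (metis even_zero)
  qed
qed

lemma approx:
  fixes s m :: nat and p :: int
  assumes "1 \<le> s" "s < fib m"
  shows "\<bar>real s * phi - of_int p\<bar> > qq ^ m"
proof (rule ccontr)
  assume "\<not> ?thesis"
  then have dle: "\<bar>real s * phi - of_int p\<bar> \<le> qq ^ m" by simp
  define d where "d = real s * phi - of_int p"
  have qm1: "qq ^ m \<le> 1" by (rule qq_pow_le1)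
  have prod0: "d * (real s * psi - of_int p) = (real s * real s) * (phi * psi) - real s * of_int p * (phi + psi) + of_int p * of_int p"
    unfolding d_def by (simp add: algebra_simps)
  have prod: "d * (real s * psi - of_int p) = of_int (p * p - int s * p - int s * int s)"
    unfolding prod0 phi_psi by simp
  have "p * p - int s * p - int s * int s \<noteq> 0" using norm_nonzero assms(1) by simp
  then have N1: "\<bar>of_int (p * p - int s * p - int s * int s)\<bar> \<ge> (1::real)"
    by linarith
  have sphi: "real s * phi \<ge> phi" using assms(1) phi_gt1 by simp
  have ppos: "of_int p \<ge> real s * phi - qq ^ m" using dle unfolding d_def by linarith
  have pup: "of_int p \<le> real s * phi + qq ^ m" using dle by linarith
  have e_pos: "of_int p - real s * psi > 0"
  proof -
    have "real s * psi \<le> 0" using psi_qq qq_pos by (simp add: mult_nonneg_nonpos)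
    moreover have "of_int p > (0::real)" using ppos sphi qm1 phi_gt1 by linarith
    ultimately show ?thesis by linarith
  qed
  have e_up: "of_int p - real s * psi \<le> real s * sqrt 5 + qq ^ m"
  proof -
    have "real s * sqrt 5 = real s * phi + real s * qq" using phi_plus_qq by (metis distrib_left)
    moreover have "real s * psi = - (real s * qq)" by (simp add: psi_qq)
    ultimately show ?thesis using pup by linarith
  qed
  have "1 \<le> \<bar>d\<bar> * \<bar>real s * psi - of_int p\<bar>" using N1 unfolding prod[symmetric] abs_mult .
  also have "\<bar>real s * psi - of_int p\<bar> = of_int p - real s * psi" using e_pos by simp
  also have "\<bar>d\<bar> * (of_int p - real s * psi) \<le> qq ^ m * (real s * sqrt 5 + qq ^ m)"
    using dle e_pos e_up unfolding d_def by (intro mult_mono) auto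
  finally have A1: "1 \<le> qq ^ m * (real s * sqrt 5 + qq ^ m)" .
  have sle: "real s \<le> real (fib m) - 1" using assms by linarith
  have "real s * sqrt 5 \<le> (real (fib m) - 1) * sqrt 5" using sle by (intro mult_right_mono) auto
  also have "\<dots> = phi ^ m - psi ^ m - sqrt 5" using binet[of m] by (simp add: algebra_simps)
  also have "\<dots> \<le> phi ^ m + qq ^ m - sqrt 5" using abs_psi_pow[of m] by linarith
  finally have sb: "real s * sqrt 5 \<le> phi ^ m + qq ^ m - sqrt 5" .
  have "qq ^ m * (real s * sqrt 5 + qq ^ m) \<le> qq ^ m * (phi ^ m + qq ^ m - sqrt 5 + qq ^ m)"
    using sb qq_pow_pos[of m] by (intro mult_left_mono) auto
  also have "\<dots> = (phi * qq) ^ m + qq ^ m * (2 * qq ^ m - sqrt 5)"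
    by (simp add: algebra_simps power_mult_distrib)
  also have "\<dots> = 1 + qq ^ m * (2 * qq ^ m - sqrt 5)" by (simp add: phi_qq_mult)
  also have "\<dots> < 1"
  proof -
    have "2 * qq ^ m - sqrt 5 < 0" using qm1 s5_bounds by linarith
    then show ?thesis using qq_pow_pos[of m] by (simp add: mult_pos_neg)
  qed
  finally show False using A1 by linarith
qed

lemma B_real: "real (B x) = of_int \<lfloor>real x * phi\<rfloor>"
proof -
  have "real x * phi \<ge> 0" using phi_gt1 by simp
  then show ?thesis unfolding B_def by simp
qed

lemma B_bounds: "real (B x) \<le> real x * phi" "real x * phi < real (B x) + 1"
  unfolding B_real by linarith+

lemma B_eq: assumes "real k \<le> real x * phi" "real x * phi < real k + 1" shows "B x = k"
proof -
  have "\<lfloor>real x * phi\<rfloor> = int k" using assms by (intro floor_unique) auto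
  then show ?thesis unfolding B_def by simp
qed

lemma B_approx:
  assumes "1 \<le> s" "s < fib m"
  shows "real (B s) + qq ^ m < real s * phi" "real s * phi < real (B s) + 1 - qq ^ m"
proof -
  have a1: "\<bar>real s * phi - of_int (int (B s))\<bar> > qq ^ m" using approx assms by blast
  have a2: "\<bar>real s * phi - of_int (int (B s) + 1)\<bar> > qq ^ m" using approx assms by blast
  show "real (B s) + qq ^ m < real s * phi" using a1 B_bounds[of s] by simp
  show "real s * phi < real (B s) + 1 - qq ^ m" using a2 B_bounds[of s] by simp
qed

lemma fib_phi': "phi * real (fib k) = real (fib (Suc k)) - psi ^ k"
  using fib_phi[of k] by simp

lemma L1:
  assumes "1 \<le> r" "r < fib j"
  shows "B (fib j + r) = fib (Suc j) + B r"
proof (rule B_eq)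
  have ap: "real (B r) + qq ^ j < real r * phi" "real r * phi < real (B r) + 1 - qq ^ j"
    using B_approx assms by auto
  have ps: "\<bar>psi ^ j\<bar> = qq ^ j" by (rule abs_psi_pow)
  have eq: "real (fib j + r) * phi = real (fib (Suc j)) - psi ^ j + real r * phi"
    using fib_phi'[of j] by (simp add: algebra_simps)
  show "real (fib (Suc j) + B r) \<le> real (fib j + r) * phi" using ap ps eq by (simp; linarith)
  show "real (fib j + r) * phi < real (fib (Suc j) + B r) + 1" using ap ps eq by (simp; linarith)
qed

lemma L2:
  assumes "1 \<le> s" "s < fib m"
  shows "B (fib m - s) + B s + 1 = fib (Suc m)"
proof -
  have ap: "real (B s) + qq ^ m < real s * phi" "real s * phi < real (B s) + 1 - qq ^ m"
    using B_approx assms by auto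
  have ps: "\<bar>psi ^ m\<bar> = qq ^ m" by (rule abs_psi_pow)
  have eq: "real (fib m - s) * phi = real (fib (Suc m)) - psi ^ m - real s * phi"
    using fib_phi'[of m] assms by (simp add: algebra_simps of_nat_diff)
  have le: "B s + 1 \<le> fib (Suc m)"
  proof -
    have "real (B s) + 1 < real (fib (Suc m)) + 1" using ap ps eq
      by (smt (verit) B_bounds(1) phi_gt1 of_nat_0_le_iff mult_nonneg_nonneg)
    then show ?thesis by linarith
  qed
  have "B (fib m - s) = fib (Suc m) - B s - 1"
  proof (rule B_eq)
    have rr: "real (fib (Suc m) - B s - 1) = real (fib (Suc m)) - real (B s) - 1"
      using le by (simp add: of_nat_diff)
    have p1: "psi ^ m \<le> qq ^ m" "- (qq ^ m) \<le> psi ^ m" using ps by linarith+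
    show "real (fib (Suc m) - B s - 1) \<le> real (fib m - s) * phi" unfolding rr eq
      using ap p1 by linarith
    show "real (fib m - s) * phi < real (fib (Suc m) - B s - 1) + 1" unfolding rr eq
      using ap p1 by linarith
  qed
  then show ?thesis using le by simp
qed

lemma B_0[simp]: "B 0 = 0" unfolding B_def by simp
lemma B_1[simp]: "B 1 = 1" by (rule B_eq) (use phi_bounds in auto)
lemma B_Suc0[simp]: "B (Suc 0) = 1" using B_1 by simp
lemma B_2[simp]: "B 2 = 3" by (rule B_eq) (use phi_bounds in auto)
lemma B_3[simp]: "B 3 = 4" by (rule B_eq) (use phi_bounds in auto)

lemma B_mono: "x \<le> y \<Longrightarrow> B x \<le> B y"
  unfolding B_def using phi_gt1 by (intro nat_mono floor_mono mult_right_mono) auto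

lemma B_ge: "x \<le> B x"
proof -
  have "real x * 1 \<le> real x * phi" using phi_gt1 by (intro mult_left_mono) auto
  then have "real x \<le> real x * phi" by simp
  have "real x < real (B x) + 1" using B_bounds(2)[of x] \<open>real x \<le> real x * phi\<close> by linarith
  then show ?thesis by linarith
qed

lemma psi_pow_gt: "psi ^ k > -1"
proof (cases k)
  case 0 then show ?thesis by simp
next
  case (Suc k')
  have "qq ^ k' \<le> 1" by (rule qq_pow_le1)
  then have "qq * qq ^ k' \<le> qq * 1" using qq_pos by (intro mult_left_mono) auto
  then have "qq ^ k < 1" using Suc qq_lt1 by simp
  then show ?thesis using abs_psi_pow[of k] by linarith
qed

lemma B_fib_le: "B (fib k) \<le> fib (Suc k)"
proof -
  have "real (fib k) * phi < real (fib (Suc k)) + 1"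
    using fib_phi'[of k] psi_pow_gt[of k] by (simp add: algebra_simps)
  then have "real (B (fib k)) < real (fib (Suc k)) + 1" using B_bounds(1)[of "fib k"] by linarith
  then show ?thesis by linarith
qed

lemma B_fib_ge: "fib (Suc k) \<le> B (fib k) + 1"
proof -
  have "psi ^ k \<le> 1" using abs_psi_pow[of k] qq_pow_le1[of k] by linarith
  then have "real (fib k) * phi \<ge> real (fib (Suc k)) - 1"
    using fib_phi'[of k] by (simp add: algebra_simps)
  then have "real (B (fib k)) + 1 > real (fib (Suc k)) - 1" using B_bounds(2)[of "fib k"] by linarith
  then show ?thesis by linarith
qed

lemma C_eq: "C m = m + B m + (if real m * phi - real (B m) \<ge> 1/2 then 1 else 0)"
proof -
  have phi2: "phi ^ 2 = phi + 1" using phi_sq by (simp add: power2_eq_square)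
  have e: "real m * phi ^ 2 + 1/2 = real m + (real m * phi + 1/2)" using phi2 by (simp add: algebra_simps)
  have bb: "real (B m) \<le> real m * phi" "real m * phi < real (B m) + 1" using B_bounds by auto
  show ?thesis
  proof (cases "real m * phi - real (B m) \<ge> 1/2")
    case True
    have "\<lfloor>real m * phi ^ 2 + 1/2\<rfloor> = int (m + B m + 1)"
      using bb True unfolding e by (intro floor_unique) auto
    then show ?thesis using True unfolding C_def by simp
  next
    case False
    have "\<lfloor>real m * phi ^ 2 + 1/2\<rfloor> = int (m + B m)"
      using bb False unfolding e by (intro floor_unique) auto
    then show ?thesis using False unfolding C_def by simp
  qed
qed




lemma B_SS0[simp]: "B (Suc (Suc 0)) = 3" using B_2 by (simp add: numeral_2_eq_2)
lemma A_SS0[simp]: "A (Suc (Suc 0)) = 1" using A_2 by (simp add: numeral_2_eq_2)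

definition X :: "nat \<Rightarrow> int" where "X n = int (A (B n)) - int (B (A n))"
definition Dl :: "nat \<Rightarrow> int" where "Dl w = int (A (B w + 1)) - int (A (B w))"

lemma fib_jm1_lt: "j \<ge> 2 \<Longrightarrow> fib (j - 1) < fib (Suc j)"
proof -
  assume j: "j \<ge> 2"
  have "fib (j - 1) \<le> fib j" by (intro fib_mono) simp
  also have "fib j < fib (Suc j)" using j by (intro fib_strict) auto
  finally show ?thesis .
qed

lemma fib_jm1_lt': "j \<ge> 3 \<Longrightarrow> fib (j - 1) < fib j"
  by (intro fib_strict) auto

lemma fib_Suc_split: "j \<ge> 1 \<Longrightarrow> fib (Suc j) = fib j + fib (j - 1)"
  by (cases j) auto

lemma B_small:
  assumes "j \<ge> 1" "1 \<le> r" "r \<le> fib (j - 1)"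
  shows "1 \<le> B r" "B r \<le> fib j"
proof -
  show "1 \<le> B r" using B_ge[of r] assms by simp
  have "B r \<le> B (fib (j - 1))" using assms by (intro B_mono)
  also have "\<dots> \<le> fib (Suc (j - 1))" by (rule B_fib_le)
  finally show "B r \<le> fib j" using assms by simp
qed

lemma B_dec:
  assumes "j \<ge> 2" "1 \<le> r" "r \<le> fib (j - 1)"
  shows "B (fib j + r) = fib (Suc j) + B r"
proof (cases "j = 2")
  case True
  then have "r = 1" using assms by simp
  then show ?thesis using True fib_small by simp
next
  case False
  then have "r < fib j" using fib_jm1_lt'[of j] assms by simp
  then show ?thesis using L1 assms by simp
qed

lemma BA_dec:
  assumes "j \<ge> 2" "1 \<le> r" "r \<le> fib (j - 1)"
  shows "B (A (fib j + r)) + B (A r) + 1 = fib (Suc (Suc j))"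
proof -
  have ar: "1 \<le> A r" "A r \<le> fib (j - 1)" using A_pos A_le' assms by auto
  have "A r < fib (Suc j)" using ar fib_jm1_lt[OF assms(1)] by simp
  then have "B (fib (Suc j) - A r) + B (A r) + 1 = fib (Suc (Suc j))" using L2 ar by simp
  moreover have "A (fib j + r) = fib (Suc j) - A r" using A_rec assms by simp
  ultimately show ?thesis by simp
qed

lemma AB_dec:
  assumes "j \<ge> 2" "1 \<le> r" "r \<le> fib (j - 1)"
  shows "A (B (fib j + r)) + A (B r) = fib (Suc (Suc j))" "A (B r) \<le> fib j"
proof -
  have b: "1 \<le> B r" "B r \<le> fib j" using B_small[of j r] assms by auto
  have "A (fib (Suc j) + B r) = fib (Suc (Suc j)) - A (B r)" using A_rec[of "Suc j" "B r"] b assms by simp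
  moreover show "A (B r) \<le> fib j" using A_le' b assms by simp
  moreover have "fib j \<le> fib (Suc (Suc j))" by (intro fib_mono) simp
  ultimately show "A (B (fib j + r)) + A (B r) = fib (Suc (Suc j))" using B_dec assms by simp
qed

lemma X_rec:
  assumes "j \<ge> 2" "1 \<le> r" "r \<le> fib (j - 1)"
  shows "X (fib j + r) = 1 - X r"
  using BA_dec[OF assms] AB_dec[OF assms] unfolding X_def by linarith

lemma X_0[simp]: "X 0 = 0" by (simp add: X_def)
lemma X_1[simp]: "X 1 = 0" by (simp add: X_def)
lemma X_Suc0[simp]: "X (Suc 0) = 0" by (simp add: X_def)

lemma X01: "X n = 0 \<or> X n = 1"
proof (induction n rule: less_induct)
  case (less n)
  show ?case
  proof (cases "n \<ge> 2")
    case False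
    then have "n = 0 \<or> n = 1" by auto
    then show ?thesis by auto
  next
    case True
    obtain j r where d: "j \<ge> 2" "1 \<le> r" "r \<le> fib (j - 1)" "n = fib j + r"
      using A_decomp[OF True] by blast
    have "r < n" using d fib_ge1[of j] by simp
    then show ?thesis using less.IH[of r] X_rec[OF d(1-3)] d(4) by auto
  qed
qed

lemma AB_eq: "A (B n) = B (A n) + nat (X n)"
  using X01[of n] unfolding X_def by auto

lemma part_c: "A (B (A n)) \<le> B (A (B n))"
proof (cases "n \<ge> 2")
  case False
  then have "n = 0 \<or> n = 1" by auto
  then show ?thesis by auto
next
  case True
  obtain j r where d: "j \<ge> 2" "1 \<le> r" "r \<le> fib (j - 1)" "n = fib j + r"
    using A_decomp[OF True] by blast
  have b: "1 \<le> B r" "B r \<le> fib j" using B_small[of j r] d by auto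
  have bn: "B n = fib (Suc j) + B r" using B_dec d by simp
  have idx: "fibidx (B n) = Suc j"
    using b bn d(1) by (intro fibidx_eq) auto
  have "fib (Suc j) \<le> A (B n)" using A_bounds_aux[of "B n"] idx bn b fib_ge1[of "Suc j"] by simp
  then have "B (fib (Suc j)) \<le> B (A (B n))" by (rule B_mono)
  then have low: "fib (Suc (Suc j)) \<le> B (A (B n)) + 1" using B_fib_ge[of "Suc j"] by simp
  have ba: "B (A n) + B (A r) + 1 = fib (Suc (Suc j))" using BA_dec d by simp
  have "1 \<le> A n" using A_pos True by simp
  then have "1 \<le> B (A n)" using B_ge[of "A n"] by simp
  moreover have "B (A n) \<le> fib (Suc (Suc j))" using ba by simp
  ultimately have "A (B (A n)) + 1 \<le> fib (Suc (Suc j))" using A_le[of "B (A n)" "Suc (Suc j)"] d by simp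
  then show ?thesis using low by simp
qed

abbreviation S3 :: "int set" where "S3 \<equiv> {-2, 0, 2}"

lemma R1:
  assumes "k \<ge> 3" "1 \<le> s" "s + 1 \<le> fib k"
  shows "Dl (fib (k + 2) - s) = - Dl (fib k - s)"
proof -
  define b where "b = B s"
  have fk: "fib k < fib (k + 2)" using assms by (intro fib_strict) auto
  have e1: "B (fib (k + 2) - s) + b + 1 = fib (Suc (k + 2))" using L2[of s "k+2"] assms fk b_def by simp
  have e2: "B (fib k - s) + b + 1 = fib (Suc k)" using L2[of s k] assms b_def by simp
  have e3: "B (fib k - 1) + 1 + 1 = fib (Suc k)" using L2[of 1 k] assms by simp
  have "b \<le> B (fib k - 1)" unfolding b_def using assms by (intro B_mono) simp
  then have bup: "b + 2 \<le> fib (Suc k)" using e3 by simp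
  have b1: "1 \<le> b" using B_ge[of s] assms b_def by simp
  define c where "c = B (fib k - s)"
  have fs: "fib (Suc (k + 2)) = fib (k + 2) + fib (Suc k)"
    by (simp add: numeral_2_eq_2)
  have bb: "B (fib (k + 2) - s) = fib (k + 2) + c" using e1 e2 fs c_def by simp
  have c1: "1 \<le> c" "c + 1 \<le> fib (Suc k)" using e2 bup b1 c_def by auto
  have k2: "k + 2 - 1 = Suc k" by simp
  have a1: "A (fib (k + 2) + c) = fib (Suc (k + 2)) - A c"
    using A_rec[of "k+2" c] c1 k2 by simp
  have a2: "A (fib (k + 2) + (c + 1)) = fib (Suc (k + 2)) - A (c + 1)"
    using A_rec[of "k+2" "c+1"] c1 k2 by simp
  have l1: "A c \<le> fib (Suc (k + 2))"
    using A_le'[of c "Suc (k+2)"] c1 fib_mono[of "Suc k" "Suc (k+2)"] by simp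
  have l2: "A (c + 1) \<le> fib (Suc (k + 2))"
    using A_le'[of "c+1" "Suc (k+2)"] c1 fib_mono[of "Suc k" "Suc (k+2)"] by simp
  show ?thesis unfolding Dl_def bb using a1 a2 l1 l2 c_def by (simp add: of_nat_diff)
qed

lemma R1_iter:
  assumes "k \<ge> 3" "1 \<le> s" "s + 1 \<le> fib k" "Dl (fib k - s) \<in> S3"
  shows "Dl (fib (k + 2 * i) - s) \<in> S3"
proof (induction i)
  case 0 then show ?case using assms by simp
next
  case (Suc i)
  have "fib k \<le> fib (k + 2 * i)" by (intro fib_mono) simp
  then have "Dl (fib (k + 2 * i + 2) - s) = - Dl (fib (k + 2 * i) - s)"
    using R1[of "k + 2 * i" s] assms by simp
  moreover have "k + 2 * Suc i = k + 2 * i + 2" by simp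
  ultimately show ?case using Suc by auto
qed

lemma R2:
  assumes "j \<ge> 4" "1 \<le> u" "u + 1 \<le> fib (j - 1)"
  shows "Dl (fib j + u) = - Dl u"
proof -
  have bd: "B (fib j + u) = fib (Suc j) + B u" using B_dec[of j u] assms by simp
  have e3: "B (fib (j - 1) - 1) + 1 + 1 = fib (Suc (j - 1))" using L2[of 1 "j - 1"] assms by simp
  have "B u \<le> B (fib (j - 1) - 1)" using assms by (intro B_mono) simp
  then have bu: "B u + 2 \<le> fib j" using e3 assms by simp
  have bu1: "1 \<le> B u" using B_ge[of u] assms by simp
  have a1: "A (fib (Suc j) + B u) = fib (Suc (Suc j)) - A (B u)"
    using A_rec[of "Suc j" "B u"] bu bu1 assms by simp
  have a2: "A (fib (Suc j) + (B u + 1)) = fib (Suc (Suc j)) - A (B u + 1)"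
    using A_rec[of "Suc j" "B u + 1"] bu bu1 assms by simp
  have fm: "fib j \<le> fib (Suc (Suc j))" by (intro fib_mono) simp
  have l1: "A (B u) \<le> fib (Suc (Suc j))" using A_le'[of "B u" j] bu fm assms by simp
  have l2: "A (B u + 1) \<le> fib (Suc (Suc j))" using A_le'[of "B u + 1" j] bu fm assms by simp
  show ?thesis unfolding Dl_def bd using a1 a2 l1 l2 by (simp add: of_nat_diff)
qed

lemma Dl_1: "Dl 1 = 0" by (simp add: Dl_def numeral_2_eq_2)
lemma Dl_2: "Dl 2 = 2" by (simp add: Dl_def)
lemma Dl_3: "Dl 3 = 0" by (simp add: Dl_def)

lemma par_split: obtains i :: nat where "n = 2 * i \<or> n = 2 * i + 1"
proof (cases "even n")
  case True then obtain i where "n = 2 * i" by (auto elim!: evenE)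
  then show ?thesis using that by blast
next
  case False then obtain i where "n = 2 * i + 1" by (auto elim!: oddE)
  then show ?thesis using that by blast
qed

lemma Dl_F1: assumes "k \<ge> 3" shows "Dl (fib k - 1) \<in> S3"
proof -
  obtain i where "k - 3 = 2 * i \<or> k - 3 = 2 * i + 1" by (rule par_split)
  then have "k = 3 + 2 * i \<or> k = 4 + 2 * i" using assms by auto
  then show ?thesis
  proof
    assume k: "k = 3 + 2 * i"
    have "Dl (fib 3 - 1) \<in> S3" using Dl_1 fib_small by simp
    then show ?thesis using R1_iter[of 3 1 i] k fib_small by simp
  next
    assume k: "k = 4 + 2 * i"
    have "Dl (fib 4 - 1) \<in> S3" using Dl_2 fib_small by simp
    then show ?thesis using R1_iter[of 4 1 i] k fib_small by simp
  qed
qed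

lemma PHI: "n \<ge> 1 \<Longrightarrow> Dl (A n) \<in> S3"
proof (induction n rule: less_induct)
  case (less n)
  show ?case
  proof (cases "n \<ge> 3")
    case False
    then have "n = 1 \<or> n = 2" using less.prems by auto
    then show ?thesis using Dl_1 by auto
  next
    case True
    obtain j r where d: "j \<ge> 2" "1 \<le> r" "r \<le> fib (j - 1)" "n = fib j + r"
      using A_decomp[of n] True by (metis Suc_leD numeral_2_eq_2 numeral_3_eq_3)
    have j3: "j \<ge> 3"
    proof (rule ccontr)
      assume "\<not> j \<ge> 3"
      then have "j = 2" using d by simp
      then show False using d True by (simp add: numeral_2_eq_2)
    qed
    have an: "A n = fib (Suc j) - A r" using A_rec d by simp
    show ?thesis
    proof (cases "r = 1")
      case True
      then show ?thesis using an Dl_F1[of "Suc j"] j3 by simp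
    next
      case False
      then have r2: "r \<ge> 2" using d by simp
      obtain j' r' where d': "j' \<ge> 2" "1 \<le> r'" "r' \<le> fib (j' - 1)" "r = fib j' + r'"
        using A_decomp[OF r2] by blast
      have "fib j' < fib (j - 1)" using d d' by simp
      then have jj: "j' + 2 \<le> j" using fib_less_imp[of j' "j - 1"] by simp
      have rl: "r' < n" using d d' fib_ge1[of j] by simp
      have ih: "Dl (A r') \<in> S3" using less.IH[OF rl] d' by simp
      have ar: "A r = fib (Suc j') - A r'" using A_rec d' by simp
      have ar': "1 \<le> A r'" "A r' \<le> fib (j' - 1)" using A_pos A_le' d' by auto
      have fsj: "fib (Suc j') = fib j' + fib (j' - 1)" using fib_Suc_split d' by simp
      have fssj: "fib (Suc (Suc j')) = fib (Suc j') + fib j'" by simp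
      obtain i where "j - j' = 2 * i \<or> j - j' = 2 * i + 1" by (rule par_split)
      then show ?thesis
      proof
        assume i: "j - j' = 2 * i"
        have "Dl (fib (Suc j') - A r) \<in> S3" using ar ar' fsj ih by simp
        moreover have "Suc j = Suc j' + 2 * i" using i jj by simp
        moreover have "A r + 1 \<le> fib (Suc j')" using ar ar' fsj by simp
        ultimately have "Dl (fib (Suc j) - A r) \<in> S3"
          using R1_iter[of "Suc j'" "A r" i] d' A_pos[of r] r2 by simp
        then show ?thesis using an by simp
      next
        assume i: "j - j' = 2 * i + 1"
        have base: "Dl (fib j' + A r') \<in> S3"
        proof -
          consider "j' = 2" | "j' = 3" | "j' \<ge> 4" using d' by linarith
          then show ?thesis
          proof cases
            case 1
            then have "r' = 1" using d' by (simp add: numeral_2_eq_2)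
            then show ?thesis using 1 Dl_2 by (simp add: numeral_2_eq_2)
          next
            case 2
            then have "r' = 1" using d' by (simp add: numeral_3_eq_3)
            then show ?thesis using 2 Dl_3 fib_small by simp
          next
            case 3
            have "A r' + 1 \<le> fib (j' - 1)" using A_le[of r' "j' - 1"] d' 3 by simp
            then have "Dl (fib j' + A r') = - Dl (A r')" using R2 3 ar' by simp
            then show ?thesis using ih by auto
          qed
        qed
        have "fib (Suc (Suc j')) - A r = fib j' + A r'" using ar ar' fsj fssj by simp
        then have "Dl (fib (Suc (Suc j')) - A r) \<in> S3" using base by simp
        moreover have "Suc j = Suc (Suc j') + 2 * i" using i jj by simp
        moreover have "A r + 1 \<le> fib (Suc (Suc j'))" using ar ar' fsj fssj by simp
        ultimately have "Dl (fib (Suc j) - A r) \<in> S3"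
          using R1_iter[of "Suc (Suc j')" "A r" i] d' A_pos[of r] r2 by simp
        then show ?thesis using an by simp
      qed
    qed
  qed
qed

lemma part_d: "int (A (A (B n))) - int (A (B (A n))) \<in> S3"
proof (cases "X n = 0")
  case True
  then show ?thesis using AB_eq[of n] by simp
next
  case False
  then have x1: "X n = 1" using X01 by auto
  then have "n \<noteq> 0" by (cases n) auto
  then have "Dl (A n) \<in> S3" using PHI by simp
  moreover have "A (B n) = B (A n) + 1" using AB_eq[of n] x1 by simp
  ultimately show ?thesis unfolding Dl_def by simp
qed




fun val :: "bool list \<Rightarrow> nat" where
  "val [] = 0"
| "val (b # bs) = (if b then fib (length bs + 2) else 0) + val bs"

fun nc :: "bool list \<Rightarrow> bool" where
  "nc [] = True"
| "nc [b] = True"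
| "nc (b1 # b2 # bs) = (\<not> (b1 \<and> b2) \<and> nc (b2 # bs))"

lemma sum_val: "(\<Sum>k<length es. if es ! k then fib (length es - k + 1) else 0) = val es"
proof (induction es)
  case Nil then show ?case by simp
next
  case (Cons b bs)
  have "(\<Sum>k<length (b # bs). if (b # bs) ! k then fib (length (b # bs) - k + 1) else 0)
     = (if b then fib (length bs + 2) else 0) +
       (\<Sum>k<length bs. if bs ! k then fib (length bs - k + 1) else 0)"
    by (simp only: length_Cons sum.lessThan_Suc_shift nth_Cons_0 nth_Cons_Suc diff_Suc_Suc
        diff_zero) (simp add: numeral_2_eq_2)
  then show ?case using Cons by simp
qed

lemma nc_iff: "(\<forall>k. Suc k < length es \<longrightarrow> \<not> (es ! k \<and> es ! Suc k)) \<longleftrightarrow> nc es"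
proof (induction es rule: nc.induct)
  case 1 then show ?case by simp
next
  case (2 b) then show ?case by simp
next
  case (3 b1 b2 bs)
  have "(\<forall>k. Suc k < length (b1 # b2 # bs) \<longrightarrow> \<not> ((b1 # b2 # bs) ! k \<and> (b1 # b2 # bs) ! Suc k))
    \<longleftrightarrow> \<not> (b1 \<and> b2) \<and> (\<forall>k. Suc k < length (b2 # bs) \<longrightarrow> \<not> ((b2 # bs) ! k \<and> (b2 # bs) ! Suc k))"
    (is "?L \<longleftrightarrow> ?R")
  proof
    assume L: ?L
    have "\<not> (b1 \<and> b2)" using L[rule_format, of 0] by simp
    moreover have "\<forall>k. Suc k < length (b2 # bs) \<longrightarrow> \<not> ((b2 # bs) ! k \<and> (b2 # bs) ! Suc k)"
    proof (intro allI impI)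
      fix k assume "Suc k < length (b2 # bs)"
      then show "\<not> ((b2 # bs) ! k \<and> (b2 # bs) ! Suc k)" using L[rule_format, of "Suc k"] by simp
    qed
    ultimately show ?R by blast
  next
    assume R: ?R
    show ?L
    proof (intro allI impI)
      fix k assume k: "Suc k < length (b1 # b2 # bs)"
      show "\<not> ((b1 # b2 # bs) ! k \<and> (b1 # b2 # bs) ! Suc k)"
      proof (cases k)
        case 0 then show ?thesis using R by simp
      next
        case (Suc k') then show ?thesis using R k by auto
      qed
    qed
  qed
  then show ?case using 3 by simp
qed

lemma zrep_iff: "is_zeck_rep m es \<longleftrightarrow> (es \<noteq> [] \<longrightarrow> hd es) \<and> nc es \<and> m = val es"
  unfolding is_zeck_rep_def nc_iff sum_val ..

lemma nc_False[simp]: "nc (False # xs) = nc xs" by (cases xs) auto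
lemma nc_tl: "nc (x # xs) \<Longrightarrow> nc xs" by (cases xs) auto

lemma val_lt_aux:
  "nc bs \<Longrightarrow> val bs < fib (length bs + 2) \<and> (bs \<noteq> [] \<longrightarrow> \<not> hd bs \<longrightarrow> val bs < fib (length bs + 1))"
proof (induction bs rule: nc.induct)
  case 1 then show ?case by simp
next
  case (2 b) then show ?case by (simp add: numeral_3_eq_3)
next
  case (3 b1 b2 bs)
  then have ih: "val (b2 # bs) < fib (length bs + 3)"
     "\<not> b2 \<longrightarrow> val (b2 # bs) < fib (length bs + 2)" by (simp_all add: numeral_3_eq_3)
  have f4: "fib (length bs + 4) = fib (length bs + 3) + fib (length bs + 2)"
    by (simp add: eval_nat_numeral)
  have f34: "fib (length bs + 3) \<le> fib (length bs + 4)" by (intro fib_mono) simp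
  show ?case
  proof (cases b1)
    case True
    then have "\<not> b2" using 3 by simp
    then show ?thesis using True ih f4 by (simp add: eval_nat_numeral)
  next
    case False
    then show ?thesis using ih f34 by (simp add: eval_nat_numeral)
  qed
qed

lemma val_lt: "nc bs \<Longrightarrow> val bs < fib (length bs + 2)"
  using val_lt_aux by blast

lemma val_uniq: "length xs = length ys \<Longrightarrow> nc xs \<Longrightarrow> nc ys \<Longrightarrow> val xs = val ys \<Longrightarrow> xs = ys"
proof (induction xs arbitrary: ys)
  case Nil then show ?case by simp
next
  case (Cons x xs)
  obtain y ys' where ys: "ys = y # ys'" using Cons.prems by (cases ys) auto
  have nx: "nc xs" "nc ys'" using Cons.prems ys nc_tl by auto
  have l: "length xs = length ys'" using Cons.prems ys by simp
  have lx1: "val xs < fib (length xs + 2)" by (rule val_lt[OF nx(1)])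
  have lx2: "val ys' < fib (length ys' + 2)" by (rule val_lt[OF nx(2)])
  have lx: "val xs < fib (length xs + 2)" "val ys' < fib (length xs + 2)" using lx1 lx2 l by auto
  have xy: "x = y"
  proof (rule ccontr)
    assume "x \<noteq> y"
    then have "x \<and> \<not> y \<or> y \<and> \<not> x" by auto
    then show False using Cons.prems ys lx l by auto
  qed
  then have "val xs = val ys'" using Cons.prems ys l by (simp split: if_splits)
  then show ?case using Cons.IH[OF l nx] xy ys by simp
qed

lemma val_hd: "es \<noteq> [] \<Longrightarrow> hd es \<Longrightarrow> fib (length es + 1) \<le> val es"
  by (cases es) auto

lemma zeck_uniq: "is_zeck_rep m xs \<Longrightarrow> is_zeck_rep m ys \<Longrightarrow> xs = ys"
proof -
  have main: "length xs < length ys \<Longrightarrow> is_zeck_rep m xs \<Longrightarrow> is_zeck_rep m ys \<Longrightarrow> False" for xs ys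
  proof -
    assume a: "length xs < length ys" "is_zeck_rep m xs" "is_zeck_rep m ys"
    have "ys \<noteq> []" using a by auto
    then have "fib (length ys + 1) \<le> m" using a val_hd zrep_iff by metis
    moreover have "fib (length xs + 2) \<le> fib (length ys + 1)" using a by (intro fib_mono) simp
    moreover have "m < fib (length xs + 2)" using a val_lt zrep_iff by metis
    ultimately show False by simp
  qed
  assume "is_zeck_rep m xs" "is_zeck_rep m ys"
  then show "xs = ys" using main[of xs ys] main[of ys xs] val_uniq zrep_iff
    by (metis linorder_neqE_nat)
qed

lemma val_rep: "val (replicate k False @ es) = val es" by (induction k) auto
lemma nc_rep: "nc (replicate k False @ es) = nc es" by (induction k) auto

lemma zeck_step:
  assumes "is_zeck_rep m es" "j \<ge> 2" "m < fib (j - 1)"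
  shows "is_zeck_rep (fib j + m) (True # replicate (j - 2 - length es) False @ es)"
proof -
  have z: "es \<noteq> [] \<longrightarrow> hd es" "nc es" "m = val es" using assms zrep_iff by auto
  have len: "es \<noteq> [] \<Longrightarrow> length es + 3 \<le> j"
  proof -
    assume "es \<noteq> []"
    then have "fib (length es + 1) \<le> m" using z val_hd by simp
    then have "fib (length es + 1) < fib (j - 1)" using assms by simp
    then have "length es + 1 < j - 1" by (rule fib_less_imp)
    then show ?thesis by simp
  qed
  have len2: "length es \<le> j - 2" using len assms by (cases "es = []") auto
  define k where "k = j - 2 - length es"
  have lk: "length (replicate k False @ es) = j - 2" using len2 k_def by simp
  have ncok: "nc (True # replicate k False @ es)"
  proof (cases "es = []")
    case True then show ?thesis using nc_rep[of _ "[]"] by (cases k) auto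
  next
    case False
    then have "k \<ge> 1" using len k_def by simp
    then obtain k' where "k = Suc k'" by (cases k) auto
    then show ?thesis using z nc_rep by simp
  qed
  have jj: "j - 2 + 2 = j" using assms(2) by simp
  have "val (True # replicate k False @ es) = fib (j - 2 + 2) + m"
    using lk val_rep z by (simp del: fib.simps)
  then have "val (True # replicate k False @ es) = fib j + m" unfolding jj .
  then show ?thesis unfolding zrep_iff k_def[symmetric] using ncok by simp
qed

lemma zeck_ex: "\<exists>es. is_zeck_rep m es"
proof (induction m rule: less_induct)
  case (less m)
  show ?case
  proof (cases "m = 0")
    case True
    then show ?thesis using zrep_iff[of 0 "[]"] by auto
  next
    case False
    then have m2: "m + 1 \<ge> 2" by simp
    define j where "j = fibidx (m + 1)"
    have p: "fib j < m + 1" "m + 1 \<le> fib (Suc j)" "j \<ge> 2" using fibidx_props[OF m2] j_def by auto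
    have fs: "fib (Suc j) = fib j + fib (j - 1)" using fib_Suc_split p by simp
    have lt: "m - fib j < fib (j - 1)" using p fs by simp
    have "m - fib j < m" using p fib_ge1[of j] by simp
    then obtain es where "is_zeck_rep (m - fib j) es" using less.IH by blast
    then have "is_zeck_rep (fib j + (m - fib j)) (True # replicate (j - 2 - length es) False @ es)"
      using zeck_step lt p by blast
    moreover have "fib j + (m - fib j) = m" using p by simp
    ultimately show ?thesis by metis
  qed
qed

lemma zeck_is: "is_zeck_rep m (zeck m)"
  unfolding zeck_def using zeck_ex zeck_uniq by (metis theI)

lemma zeck_eq: "is_zeck_rep m es \<Longrightarrow> zeck m = es"
  using zeck_is zeck_uniq by blast

lemma zeck_ones_0: "zeck_ones 0 = 0"
proof -
  have "is_zeck_rep 0 []" using zrep_iff by simp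
  then show ?thesis unfolding zeck_ones_def using zeck_eq by simp
qed

lemma zeck_ones_step:
  assumes "j \<ge> 2" "m < fib (j - 1)"
  shows "zeck_ones (fib j + m) = 1 + zeck_ones m"
proof -
  have "zeck (fib j + m) = True # replicate (j - 2 - length (zeck m)) False @ zeck m"
    using zeck_step[OF zeck_is assms] zeck_eq by blast
  then show ?thesis unfolding zeck_ones_def by simp
qed

lemma X_zeck: "n \<ge> 1 \<Longrightarrow> X n = int (zeck_ones (n - 1) mod 2)"
proof (induction n rule: less_induct)
  case (less n)
  show ?case
  proof (cases "n \<ge> 2")
    case False
    then have "n = 1" using less.prems by simp
    then show ?thesis using zeck_ones_0 by simp
  next
    case True
    obtain j r where d: "j \<ge> 2" "1 \<le> r" "r \<le> fib (j - 1)" "n = fib j + r"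
      using A_decomp[OF True] by blast
    have rl: "r < n" using d fib_ge1[of j] by simp
    have ih: "X r = int (zeck_ones (r - 1) mod 2)" using less.IH[OF rl] d by simp
    have "n - 1 = fib j + (r - 1)" using d by simp
    then have zo: "zeck_ones (n - 1) = 1 + zeck_ones (r - 1)" using zeck_ones_step[of j "r - 1"] d by simp
    have "X n = 1 - X r" using X_rec d by simp
    then show ?thesis using ih zo by (simp add: mod_Suc)
  qed
qed




definition rho :: "nat \<Rightarrow> real" where "rho n = real (A n) * phi - real (B (A n)) - 1/2"
definition ee :: "nat \<Rightarrow> int" where "ee m = (if real m * phi - real (B m) \<ge> 1/2 then 1 else 0)"
definition cst :: real where "cst = 1 / (2 - 2 * qq)"
definition INVP :: "nat \<Rightarrow> real \<Rightarrow> bool" where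
  "INVP J D \<longleftrightarrow> D \<ge> cst * qq ^ (J + 3 + J mod 2) \<or> D \<le> - (cst * qq ^ (J + 4 - J mod 2))"

lemma C_int: "int (C m) = int m + int (B m) + ee m"
  using C_eq[of m] unfolding ee_def by simp

lemma qq3: "qq ^ 3 = 2 * qq - 1"
proof -
  have "qq ^ 3 = qq * (qq * qq)" by (simp add: power3_eq_cube)
  also have "\<dots> = qq * (1 - qq)" using qq_sq by simp
  also have "\<dots> = qq - qq * qq" by (simp add: algebra_simps)
  also have "\<dots> = 2 * qq - 1" using qq_sq by simp
  finally show ?thesis .
qed

lemma cst_pos: "cst > 0" using qq_lt1 by (simp add: cst_def)

lemma cst_id: "cst = 1 + cst * qq ^ 3"
proof -
  have "2 - 2 * qq > 0" using qq_lt1 by simp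
  then show ?thesis unfolding cst_def qq3 by (simp add: field_simps)
qed

lemma qpow_mono: "a \<le> b \<Longrightarrow> qq ^ b \<le> qq ^ a"
  using qq_pos qq_lt1 by (intro power_decreasing) auto

lemma cq_mono: "a \<le> b \<Longrightarrow> cst * qq ^ b \<le> cst * qq ^ a"
  using qpow_mono cst_pos by (intro mult_left_mono) auto

lemma cq_pos: "cst * qq ^ a > 0" using cst_pos qq_pos by simp

lemma cq_split: "cst * qq ^ (j + 1) = qq ^ (j + 1) + cst * qq ^ (j + 4)"
proof -
  have "cst * qq ^ (j + 1) = (1 + cst * qq ^ 3) * qq ^ (j + 1)" using cst_id by simp
  also have "\<dots> = qq ^ (j + 1) + cst * (qq ^ 3 * qq ^ (j + 1))" by (simp add: algebra_simps)
  also have "qq ^ 3 * qq ^ (j + 1) = qq ^ (j + 4)"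
    by (metis add.commute add_numeral_left numeral_One power_add semiring_norm(2) semiring_norm(8))
  finally show ?thesis .
qed

lemma psi_pow_parity: "psi ^ k = (if even k then qq ^ k else - (qq ^ k))"
  unfolding psi_qq by (simp add: power_minus')

lemma INVP_nz: "INVP J D \<Longrightarrow> D \<noteq> 0"
  unfolding INVP_def using cq_pos by (metis add_le_same_cancel1 le_minus_iff linorder_not_le neg_0_le_iff_le)

lemma INVP_step:
  assumes inv: "INVP J D" and jJ: "J + 2 \<le> j"
  shows "INVP j (- D - psi ^ (j + 1)) \<and> (D > 0 \<longrightarrow> - D - psi ^ (j + 1) < 0)
         \<and> (D < 0 \<longrightarrow> - D - psi ^ (j + 1) > 0)"
proof -
  let ?D' = "- D - psi ^ (j + 1)"
  have pq: "qq ^ (j + 1) > 0" using qq_pos by simp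
  consider (P) "D \<ge> cst * qq ^ (J + 3 + J mod 2)" | (N) "D \<le> - (cst * qq ^ (J + 4 - J mod 2))"
    using inv unfolding INVP_def by blast
  then show ?thesis
  proof cases
    case P
    have Dpos: "D > 0" using P cq_pos[of "J + 3 + J mod 2"] by linarith
    show ?thesis
    proof (cases "even j")
      case True
      then have o: "\<not> even (j + 1)" by simp
      have ps: "psi ^ (j + 1) = - (qq ^ (j + 1))" by (simp only: psi_pow_parity[of "j+1"] o if_False)
      have ex: "J + 3 + J mod 2 \<le> j + 1" using jJ True by presburger
      have "D \<ge> cst * qq ^ (j + 1)" using P cq_mono[OF ex] by linarith
      then have X: "?D' \<le> - (cst * qq ^ (j + 4))" using ps cq_split[of j] by linarith
      have e: "j + 4 - j mod 2 = j + 4" using True by simp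
      have "?D' \<le> - (cst * qq ^ (j + 4 - j mod 2))" using X unfolding e .
      then show ?thesis using X Dpos cq_pos[of "j+4"] unfolding INVP_def by auto
    next
      case False
      then have o: "even (j + 1)" by simp
      have ps: "psi ^ (j + 1) = qq ^ (j + 1)" by (simp only: psi_pow_parity[of "j+1"] o if_True)
      have ex: "J + 3 + J mod 2 \<le> j + 3" using jJ by presburger
      have X: "?D' \<le> - (cst * qq ^ (j + 3))" using P cq_mono[OF ex] ps pq by linarith
      have e: "j + 4 - j mod 2 = j + 3" using False by presburger
      have "?D' \<le> - (cst * qq ^ (j + 4 - j mod 2))" using X unfolding e .
      then show ?thesis using X Dpos cq_pos[of "j+3"] unfolding INVP_def by auto
    qed
  next
    case N
    have Dneg: "D < 0" using N cq_pos[of "J + 4 - J mod 2"] by linarith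
    show ?thesis
    proof (cases "even j")
      case True
      then have o: "\<not> even (j + 1)" by simp
      have ps: "psi ^ (j + 1) = - (qq ^ (j + 1))" by (simp only: psi_pow_parity[of "j+1"] o if_False)
      have ex: "J + 4 - J mod 2 \<le> j + 3" using jJ by presburger
      have X: "?D' \<ge> cst * qq ^ (j + 3)" using N cq_mono[OF ex] ps pq by linarith
      have e: "j + 3 + j mod 2 = j + 3" using True by presburger
      have "?D' \<ge> cst * qq ^ (j + 3 + j mod 2)" using X unfolding e .
      then show ?thesis using X Dneg cq_pos[of "j+3"] unfolding INVP_def by auto
    next
      case False
      then have o: "even (j + 1)" by simp
      have ps: "psi ^ (j + 1) = qq ^ (j + 1)" by (simp only: psi_pow_parity[of "j+1"] o if_True)
      have ex: "J + 4 - J mod 2 \<le> j + 1" using jJ False by presburger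
      have "- D \<ge> cst * qq ^ (j + 1)" using N cq_mono[OF ex] by linarith
      then have X: "?D' \<ge> cst * qq ^ (j + 4)" using ps cq_split[of j] by linarith
      have e: "j + 3 + j mod 2 = j + 4" using False by presburger
      have "?D' \<ge> cst * qq ^ (j + 3 + j mod 2)" using X unfolding e .
      then show ?thesis using X Dneg cq_pos[of "j+4"] unfolding INVP_def by auto
    qed
  qed
qed

lemma rho_rec:
  assumes "j \<ge> 2" "1 \<le> r" "r \<le> fib (j - 1)"
  shows "rho (fib j + r) = - rho r - psi ^ (j + 1)"
proof -
  have an: "A (fib j + r) = fib (Suc j) - A r" using A_rec assms by simp
  have "j - 1 \<ge> 1" using assms by simp
  then have "A r \<le> fib (j - 1)" using A_le'[of r "j - 1"] assms by simp
  then have ar: "A r \<le> fib (Suc j)" using fib_jm1_lt[of j] assms by simp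
  have ba: "B (A (fib j + r)) + B (A r) + 1 = fib (Suc (Suc j))" using BA_dec assms by simp
  have r1: "real (A (fib j + r)) = real (fib (Suc j)) - real (A r)" using an ar by (simp add: of_nat_diff)
  have r2: "real (B (A (fib j + r))) = real (fib (Suc (Suc j))) - real (B (A r)) - 1"
    using ba by linarith
  have f: "phi * real (fib (Suc j)) = real (fib (Suc (Suc j))) - psi ^ Suc j" by (rule fib_phi')
  show ?thesis unfolding rho_def r1 r2 using f by (simp add: algebra_simps)
qed

lemma qq5: "qq ^ 5 = 5 * qq - 3"
proof -
  have "qq ^ 5 = qq ^ 3 * (qq * qq)" by (simp add: eval_nat_numeral)
  also have "\<dots> = (2 * qq - 1) * (1 - qq)" using qq_sq qq3 by simp
  also have "\<dots> = 3 * qq - 1 - 2 * (qq * qq)" by (simp add: algebra_simps)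
  also have "\<dots> = 5 * qq - 3" using qq_sq by simp
  finally show ?thesis .
qed

lemma rho_1: "rho 1 = cst * qq ^ 5"
proof -
  have "rho 1 = qq - 1/2" unfolding rho_def by (simp add: phi_qq)
  moreover have "cst * qq ^ 5 = qq - 1/2"
  proof -
    have "2 - 2 * qq > 0" using qq_lt1 by simp
    then show ?thesis unfolding cst_def qq5 using qq_sq by (simp add: field_simps)
  qed
  ultimately show ?thesis by simp
qed

definition Jf :: "nat \<Rightarrow> nat" where "Jf n = (if n \<le> 1 then 1 else fibidx n)"

lemma fibidx_2: "fibidx 2 = 2" by (rule fibidx_eq) (simp_all add: numeral_2_eq_2)

lemma INV: "n \<ge> 1 \<Longrightarrow> INVP (Jf n) (rho n)"
proof (induction n rule: less_induct)
  case (less n)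
  show ?case
  proof (cases "n \<ge> 3")
    case False
    then have "n = 1 \<or> n = 2" using less.prems by auto
    moreover have "rho 2 = rho 1" unfolding rho_def by simp
    ultimately show ?thesis using rho_1 unfolding INVP_def Jf_def using fibidx_2 by auto
  next
    case True
    obtain j r where d: "j \<ge> 2" "1 \<le> r" "r \<le> fib (j - 1)" "n = fib j + r" "fibidx n = j"
      using A_decomp[of n] True by (metis Suc_leD numeral_2_eq_2 numeral_3_eq_3)
    have j3: "j \<ge> 3"
    proof (rule ccontr)
      assume "\<not> j \<ge> 3"
      then have "j = 2" using d by simp
      then show False using d True by (simp add: numeral_2_eq_2)
    qed
    have rl: "r < n" using d fib_ge1[of j] by simp
    have ih: "INVP (Jf r) (rho r)" using less.IH[OF rl] d by simp
    have jr: "Jf r + 2 \<le> j"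
    proof (cases "r \<le> 1")
      case True then show ?thesis using j3 unfolding Jf_def by simp
    next
      case False
      then have "fib (fibidx r) < fib (j - 1)" using fibidx_props(1)[of r] d by simp
      then have "fibidx r < j - 1" by (rule fib_less_imp)
      then show ?thesis using False unfolding Jf_def by simp
    qed
    have "INVP j (rho n)" using INVP_step[OF ih jr] rho_rec[OF d(1-3)] d(4) by simp
    moreover have "Jf n = j" using d True unfolding Jf_def by simp
    ultimately show ?thesis by simp
  qed
qed

lemma ee_rho: "ee (A n) = (if rho n \<ge> 0 then 1 else 0)"
  unfolding ee_def rho_def by simp

lemma FLIP:
  assumes "j \<ge> 3" "1 \<le> r" "r \<le> fib (j - 1)"
  shows "ee (A (fib j + r)) = 1 - ee (A r)"
proof -
  have ih: "INVP (Jf r) (rho r)" using INV assms by simp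
  have jr: "Jf r + 2 \<le> j"
  proof (cases "r \<le> 1")
    case True then show ?thesis using assms unfolding Jf_def by simp
  next
    case False
    then have "fib (fibidx r) < fib (j - 1)" using fibidx_props(1)[of r] assms by simp
    then have "fibidx r < j - 1" by (rule fib_less_imp)
    then show ?thesis using False unfolding Jf_def by simp
  qed
  have st: "(rho r > 0 \<longrightarrow> - rho r - psi ^ (j + 1) < 0) \<and> (rho r < 0 \<longrightarrow> - rho r - psi ^ (j + 1) > 0)"
    using INVP_step[OF ih jr] by blast
  have nz: "rho r \<noteq> 0" using INVP_nz ih by blast
  have rr: "rho (fib j + r) = - rho r - psi ^ (j + 1)" using rho_rec assms by simp
  show ?thesis unfolding ee_rho rr using st nz by auto
qed

definition Sw :: "nat \<Rightarrow> nat list" where "Sw k = (fib_morph ^^ k) [0]"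

lemma fm_append: "fib_morph (u @ v) = fib_morph u @ fib_morph v"
  unfolding fib_morph_def by simp

lemma Sw_Suc: "Sw (Suc k) = fib_morph (Sw k)" unfolding Sw_def by simp

lemma Sw_0: "Sw 0 = [0]" unfolding Sw_def by simp
lemma Sw_1: "Sw 1 = [0, 1]" unfolding Sw_def fib_morph_def by simp
lemma Sw_Suc0: "Sw (Suc 0) = [0, 1]" using Sw_1 by simp

lemma Sw_rec: "Sw (Suc (Suc k)) = Sw (Suc k) @ Sw k"
proof (induction k)
  case 0 then show ?case unfolding Sw_def fib_morph_def by simp
next
  case (Suc k)
  have "Sw (Suc (Suc (Suc k))) = fib_morph (Sw (Suc (Suc k)))" by (rule Sw_Suc)
  also have "\<dots> = fib_morph (Sw (Suc k)) @ fib_morph (Sw k)" using Suc by (simp add: fm_append)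
  also have "\<dots> = Sw (Suc (Suc k)) @ Sw (Suc k)" by (simp add: Sw_Suc)
  finally show ?case .
qed

lemma Sw_len: "length (Sw k) = fib (k + 2)"
proof (induction k rule: fib.induct)
  case 1 then show ?case by (simp add: Sw_0)
next
  case 2 then show ?case using Sw_Suc0 by (simp add: numeral_3_eq_3)
next
  case (3 n) then show ?case by (simp add: Sw_rec)
qed

lemma Sw_ext: "\<exists>t. Sw (Suc k) = Sw k @ t"
proof (cases k)
  case 0 then show ?thesis by (simp add: Sw_0 Sw_Suc0)
next
  case (Suc k') then show ?thesis using Sw_rec by auto
qed

lemma Sw_prefix: "k \<le> k' \<Longrightarrow> i < length (Sw k) \<Longrightarrow> Sw k' ! i = Sw k ! i"
proof (induction k' rule: dec_induct)
  case base then show ?case by simp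
next
  case (step m)
  obtain t where "Sw (Suc m) = Sw m @ t" using Sw_ext by blast
  moreover have "length (Sw k) \<le> length (Sw m)" unfolding Sw_len using step(1) by (intro fib_mono) simp
  ultimately show ?case using step by (simp add: nth_append)
qed

lemma fword_Sw: "i < length (Sw k) \<Longrightarrow> fword i = Sw k ! i"
proof -
  assume a: "i < length (Sw k)"
  have li: "i < length (Sw i)" using Sw_len le_fib_Suc[of "Suc i"] by simp
  have "fword i = Sw i ! i" unfolding fword_def Sw_def ..
  then show ?thesis
  proof (cases "i \<le> k")
    case True then show ?thesis using Sw_prefix li \<open>fword i = Sw i ! i\<close> by simp
  next
    case False then show ?thesis using Sw_prefix[of k i i] a \<open>fword i = Sw i ! i\<close> by simp
  qed
qed

lemma fword_rec:
  assumes "j \<ge> 3" "i < fib (j - 1)"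
  shows "fword (fib j + i) = fword i"
proof -
  obtain k where k: "j = k + 3" using assms by (metis add.commute le_Suc_ex)
  have e: "Sw (Suc (Suc k)) = Sw (Suc k) @ Sw k" by (rule Sw_rec)
  have l1: "length (Sw (Suc k)) = fib j" using Sw_len k by (simp add: eval_nat_numeral)
  have l0: "length (Sw k) = fib (j - 1)" using Sw_len k by (simp add: eval_nat_numeral)
  have "fword (fib j + i) = Sw (Suc (Suc k)) ! (fib j + i)"
    using fword_Sw[of "fib j + i" "Suc (Suc k)"] e l1 l0 assms by simp
  also have "\<dots> = Sw k ! i" using e l1 by (simp add: nth_append)
  also have "\<dots> = fword i" using fword_Sw[of i k] l0 assms by simp
  finally show ?thesis .
qed

lemma fword_0: "fword 0 = 0" unfolding fword_def by simp
lemma fword_1: "fword 1 = 1" unfolding fword_def fib_morph_def by simp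

lemma ee_1: "ee 1 = 1" using rho_1 cq_pos[of 5] ee_rho[of 1] by simp

lemma part_e: "int (C (A n)) - int (A (B n)) - int (A n) \<in> {-1, 0, 1}"
proof -
  have "int (C (A n)) - int (A (B n)) - int (A n) = ee (A n) - X n"
    using C_int[of "A n"] unfolding X_def by simp
  moreover have "ee (A n) = 0 \<or> ee (A n) = 1" unfolding ee_def by simp
  moreover have "X n = 0 \<or> X n = 1" by (rule X01)
  ultimately show ?thesis by auto
qed

lemma part_f_aux: "n \<ge> 1 \<Longrightarrow> (ee (A n) = X n \<longleftrightarrow> fword (n - 1) = 1)"
proof (induction n rule: less_induct)
  case (less n)
  show ?case
  proof (cases "n \<ge> 3")
    case False
    then have "n = 1 \<or> n = 2" using less.prems by auto
    moreover have "X 2 = 1" unfolding X_def by simp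
    ultimately show ?thesis using ee_1 fword_0 fword_1 by auto
  next
    case True
    obtain j r where d: "j \<ge> 2" "1 \<le> r" "r \<le> fib (j - 1)" "n = fib j + r"
      using A_decomp[of n] True by (metis Suc_leD numeral_2_eq_2 numeral_3_eq_3)
    have j3: "j \<ge> 3"
    proof (rule ccontr)
      assume "\<not> j \<ge> 3"
      then have "j = 2" using d by simp
      then show False using d True by (simp add: numeral_2_eq_2)
    qed
    have rl: "r < n" using d fib_ge1[of j] by simp
    have ih: "ee (A r) = X r \<longleftrightarrow> fword (r - 1) = 1" using less.IH[OF rl] d by simp
    have "n - 1 = fib j + (r - 1)" using d by simp
    then have fw: "fword (n - 1) = fword (r - 1)" using fword_rec[of j "r - 1"] j3 d by simp
    show ?thesis using ih fw FLIP[OF j3 d(2,3)] X_rec[OF d(1-3)] d(4) by auto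
  qed
qed

lemma part_g_aux: "n \<ge> 1 \<Longrightarrow> X (B n) = X n \<and> ee (A (B n)) = 1 - X n"
proof (induction n rule: less_induct)
  case (less n)
  show ?case
  proof (cases "n \<ge> 2")
    case False
    then have "n = 1" using less.prems by simp
    then show ?thesis using ee_1 by simp
  next
    case True
    obtain j r where d: "j \<ge> 2" "1 \<le> r" "r \<le> fib (j - 1)" "n = fib j + r"
      using A_decomp[OF True] by blast
    have rl: "r < n" using d fib_ge1[of j] by simp
    have ih: "X (B r) = X r" "ee (A (B r)) = 1 - X r" using less.IH[OF rl] d by auto
    have bn: "B n = fib (Suc j) + B r" using B_dec d by simp
    have b: "1 \<le> B r" "B r \<le> fib (Suc j - 1)" using B_small[of j r] d by auto
    have x1: "X (B n) = 1 - X (B r)" using X_rec[of "Suc j" "B r"] bn b d by simp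
    have e1: "ee (A (B n)) = 1 - ee (A (B r))" using FLIP[of "Suc j" "B r"] bn b d by simp
    have xn: "X n = 1 - X r" using X_rec d by simp
    show ?thesis using x1 e1 xn ih by simp
  qed
qed

lemma part_g: "n \<ge> 1 \<Longrightarrow> int (C (A (B n))) + int (A (B n)) - int (A (B (B n))) - 2 * int (B (A n)) = 1"
proof -
  assume n: "n \<ge> 1"
  have g: "X (B n) = X n" "ee (A (B n)) = 1 - X n" using part_g_aux n by auto
  have c: "int (C (A (B n))) = int (A (B n)) + int (B (A (B n))) + ee (A (B n))" by (rule C_int)
  have x1: "int (A (B (B n))) = int (B (A (B n))) + X (B n)" unfolding X_def by simp
  have x2: "int (A (B n)) = int (B (A n)) + X n" unfolding X_def by simp
  show ?thesis using c x1 x2 g by simp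
qed


theorem theorem22:
  shows "(\<forall>n. A (B n) \<ge> B (A n))
    \<and> (\<forall>n\<ge>1. int (A (B n)) - int (B (A n)) = int (zeck_ones (n - 1) mod 2))
    \<and> (\<forall>n. B (A (B n)) \<ge> A (B (A n)))
    \<and> (\<forall>n. int (A (A (B n))) - int (A (B (A n))) \<in> {-2, 0, 2})
    \<and> (\<forall>n. int (C (A n)) - int (A (B n)) - int (A n) \<in> {-1, 0, 1})
    \<and> (\<forall>n\<ge>1. (int (C (A n)) - int (A (B n)) - int (A n) = 0 \<longleftrightarrow> fword (n - 1) = 1))
    \<and> (\<forall>n\<ge>1. int (C (A (B n))) + int (A (B n)) - int (A (B (B n))) - 2 * int (B (A n)) = 1)"
proof (intro conjI allI impI)
  fix n :: nat
  show "B (A n) \<le> A (B n)" using X01[of n] unfolding X_def by auto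
next
  fix n :: nat assume "n \<ge> 1"
  then show "int (A (B n)) - int (B (A n)) = int (zeck_ones (n - 1) mod 2)"
    using X_zeck unfolding X_def by simp
next
  fix n :: nat
  show "A (B (A n)) \<le> B (A (B n))" by (rule part_c)
next
  fix n :: nat
  show "int (A (A (B n))) - int (A (B (A n))) \<in> {-2, 0, 2}" by (rule part_d)
next
  fix n :: nat
  show "int (C (A n)) - int (A (B n)) - int (A n) \<in> {-1, 0, 1}" by (rule part_e)
next
  fix n :: nat assume n: "n \<ge> 1"
  have "int (C (A n)) - int (A (B n)) - int (A n) = ee (A n) - X n"
    using C_int[of "A n"] unfolding X_def by simp
  then show "int (C (A n)) - int (A (B n)) - int (A n) = 0 \<longleftrightarrow> fword (n - 1) = 1"
    using part_f_aux[OF n] by auto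
next
  fix n :: nat assume n: "n \<ge> 1"
  show "int (C (A (B n))) + int (A (B n)) - int (A (B (B n))) - 2 * int (B (A n)) = 1"
    by (rule part_g[OF n])
qed

end
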